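(* Let $X$ be a nominal $\mathrm{Perm}$-set and $Y$ a nominal $\mathrm{Sb}$-set. (1) If $\dim(X)\le 1$, then the unit $\eta_X\colon X\to UF(X)$, $\eta_X(x)=[\mathrm{id},x]$, is an isomorphism. (2) If $\dim(Y)\le 1$, then the counit $\epsilon_Y\colon FU(Y)\to Y$, $\epsilon_Y([m,y])=m\cdot y$, is an isomorphism.
   Context: Atoms $\mathbb{A}$ (countably infinite); $\mathrm{Sb}$ = monoid of functions $\mathbb{A}\to\mathbb{A}$ that are the identity outside a finite set, under composition; $\mathrm{Perm}\subseteq\mathrm{Sb}$ the bijections. For $M\in\{\mathrm{Sb},\mathrm{Perm}\}$: nominal $M$-sets are sets with $M$-action in which every $x$ has a finite support $C\subseteq\mathbb{A}$ (meaning $m_1|_C=m_2|_C\Rightarrow m_1x=m_2x$ for $m_i\in M$); each $x$ has a least finite support $\mathrm{supp}(x)$; $\dim(X)=\max_x|\mathrm{supp}(x)|$. $U$ forgets from nominal $\mathrm{Sb}$-sets to nominal $\mathrm{Perm}$-sets. For a nominal $\mathrm{Perm}$-set $X$, $F(X)=(\mathrm{Sb}\times X)/{\sim}$, $\sim$ the least equivalence containing $(m,gx)\sim(mg,x)$ ($g\in\mathrm{Perm}$) and $(m,x)\sim(m',x)$ if $m|_C=m'|_C$ for some $\mathrm{Perm}$-support $C$ of $x$; classes $[m,x]$, action $n\cdot[m,x]=[nm,x]$. $F$ is left adjoint to $U$ with the stated unit and counit. *)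

theory Defs
  imports Main
begin

type_synonym atom = nat

definition Sb :: "(atom \<Rightarrow> atom) set" where
  "Sb = {m. finite {a. m a \<noteq> a}}"

definition Perm :: "(atom \<Rightarrow> atom) set" where
  "Perm = {m \<in> Sb. bij m}"

definition supports :: "(atom \<Rightarrow> atom) set \<Rightarrow> ((atom \<Rightarrow> atom) \<Rightarrow> 'x \<Rightarrow> 'x) \<Rightarrow> atom set \<Rightarrow> 'x \<Rightarrow> bool" where
  "supports M act C x \<longleftrightarrow>
     (\<forall>m1\<in>M. \<forall>m2\<in>M. (\<forall>a\<in>C. m1 a = m2 a) \<longrightarrow> act m1 x = act m2 x)"

definition nominal_set :: "(atom \<Rightarrow> atom) set \<Rightarrow> 'x set \<Rightarrow> ((atom \<Rightarrow> atom) \<Rightarrow> 'x \<Rightarrow> 'x) \<Rightarrow> bool" where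
  "nominal_set M X act \<longleftrightarrow>
     (\<forall>m\<in>M. \<forall>x\<in>X. act m x \<in> X) \<and>
     (\<forall>x\<in>X. act id x = x) \<and>
     (\<forall>m1\<in>M. \<forall>m2\<in>M. \<forall>x\<in>X. act (m1 \<circ> m2) x = act m1 (act m2 x)) \<and>
     (\<forall>x\<in>X. \<exists>C. finite C \<and> supports M act C x)"

definition supp :: "(atom \<Rightarrow> atom) set \<Rightarrow> ((atom \<Rightarrow> atom) \<Rightarrow> 'x \<Rightarrow> 'x) \<Rightarrow> 'x \<Rightarrow> atom set" where
  "supp M act x = (THE C. finite C \<and> supports M act C x \<and>
      (\<forall>D. finite D \<and> supports M act D x \<longrightarrow> C \<subseteq> D))"

definition dim_le_one :: "(atom \<Rightarrow> atom) set \<Rightarrow> 'x set \<Rightarrow> ((atom \<Rightarrow> atom) \<Rightarrow> 'x \<Rightarrow> 'x) \<Rightarrow> bool" where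
  "dim_le_one M X act \<longleftrightarrow> (\<forall>x\<in>X. card (supp M act x) \<le> 1)"

inductive Frel :: "'x set \<Rightarrow> ((atom \<Rightarrow> atom) \<Rightarrow> 'x \<Rightarrow> 'x) \<Rightarrow>
    (atom \<Rightarrow> atom) \<times> 'x \<Rightarrow> (atom \<Rightarrow> atom) \<times> 'x \<Rightarrow> bool"
  for X act where
  refl: "m \<in> Sb \<Longrightarrow> x \<in> X \<Longrightarrow> Frel X act (m, x) (m, x)"
| sym: "Frel X act p q \<Longrightarrow> Frel X act q p"
| trans: "Frel X act p q \<Longrightarrow> Frel X act q r \<Longrightarrow> Frel X act p r"
| perm: "m \<in> Sb \<Longrightarrow> g \<in> Perm \<Longrightarrow> x \<in> X \<Longrightarrow> Frel X act (m, act g x) (m \<circ> g, x)"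
| supp_eq: "m \<in> Sb \<Longrightarrow> m' \<in> Sb \<Longrightarrow> x \<in> X \<Longrightarrow> finite C \<Longrightarrow> supports Perm act C x \<Longrightarrow>
      (\<forall>a\<in>C. m a = m' a) \<Longrightarrow> Frel X act (m, x) (m', x)"

definition Fclass :: "'x set \<Rightarrow> ((atom \<Rightarrow> atom) \<Rightarrow> 'x \<Rightarrow> 'x) \<Rightarrow> (atom \<Rightarrow> atom) \<Rightarrow> 'x \<Rightarrow>
    ((atom \<Rightarrow> atom) \<times> 'x) set" where
  "Fclass X act m x = {q. Frel X act (m, x) q}"

definition F_carrier :: "'x set \<Rightarrow> ((atom \<Rightarrow> atom) \<Rightarrow> 'x \<Rightarrow> 'x) \<Rightarrow> ((atom \<Rightarrow> atom) \<times> 'x) set set" where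
  "F_carrier X act = {Fclass X act m x | m x. m \<in> Sb \<and> x \<in> X}"

text \<open>n \<cdot> [m,x] = [n m, x].\<close>
definition F_act :: "'x set \<Rightarrow> ((atom \<Rightarrow> atom) \<Rightarrow> 'x \<Rightarrow> 'x) \<Rightarrow>
    (atom \<Rightarrow> atom) \<Rightarrow> ((atom \<Rightarrow> atom) \<times> 'x) set \<Rightarrow> ((atom \<Rightarrow> atom) \<times> 'x) set" where
  "F_act X act n c = {q. \<exists>p\<in>c. Frel X act (n \<circ> fst p, snd p) q}"

definition unit_map :: "'x set \<Rightarrow> ((atom \<Rightarrow> atom) \<Rightarrow> 'x \<Rightarrow> 'x) \<Rightarrow> 'x \<Rightarrow> ((atom \<Rightarrow> atom) \<times> 'x) set" where
  "unit_map X act x = Fclass X act id x"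

definition counit_map :: "((atom \<Rightarrow> atom) \<Rightarrow> 'y \<Rightarrow> 'y) \<Rightarrow> ((atom \<Rightarrow> atom) \<times> 'y) set \<Rightarrow> 'y" where
  "counit_map act c = (let p = (SOME p. p \<in> c) in act (fst p) (snd p))"

definition nom_iso :: "(atom \<Rightarrow> atom) set \<Rightarrow> 'a set \<Rightarrow> ((atom \<Rightarrow> atom) \<Rightarrow> 'a \<Rightarrow> 'a) \<Rightarrow>
    'b set \<Rightarrow> ((atom \<Rightarrow> atom) \<Rightarrow> 'b \<Rightarrow> 'b) \<Rightarrow> ('a \<Rightarrow> 'b) \<Rightarrow> bool" where
  "nom_iso M A actA B actB f \<longleftrightarrow>
     bij_betw f A B \<and> (\<forall>m\<in>M. \<forall>a\<in>A. f (actA m a) = actB m (f a))"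

end

theory Submission
  imports Defs "HOL-Combinatorics.Permutations"
begin

lemma Sb_id[simp]: "id \<in> Sb" by (simp add: Sb_def)

lemma Sb_comp: "m \<in> Sb \<Longrightarrow> n \<in> Sb \<Longrightarrow> m \<circ> n \<in> Sb"
proof -
  assume a: "m \<in> Sb" "n \<in> Sb"
  have "{a. (m \<circ> n) a \<noteq> a} \<subseteq> {a. m a \<noteq> a} \<union> {a. n a \<noteq> a}" by auto
  then show ?thesis using a unfolding Sb_def by (auto intro: finite_subset)
qed

lemma Perm_Sb: "g \<in> Perm \<Longrightarrow> g \<in> Sb" by (simp add: Perm_def)

lemma Perm_id[simp]: "id \<in> Perm" by (simp add: Perm_def)

lemma Perm_comp: "g \<in> Perm \<Longrightarrow> h \<in> Perm \<Longrightarrow> g \<circ> h \<in> Perm"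
  by (auto simp: Perm_def Sb_comp bij_comp)

lemma Perm_inv: "g \<in> Perm \<Longrightarrow> inv g \<in> Perm"
proof -
  assume g: "g \<in> Perm"
  then have b: "bij g" and f: "finite {a. g a \<noteq> a}" by (auto simp: Perm_def Sb_def)
  have "{a. inv g a \<noteq> a} \<subseteq> g ` {a. g a \<noteq> a}"
  proof
    fix a assume "a \<in> {a. inv g a \<noteq> a}"
    then have "inv g a \<noteq> a" by simp
    moreover have "g (inv g a) = a" using b by (simp add: bij_is_surj surj_f_inv_f)
    ultimately show "a \<in> g ` {a. g a \<noteq> a}" by (metis (mono_tags, lifting) image_eqI mem_Collect_eq)
  qed
  then have "finite {a. inv g a \<noteq> a}" using f by (auto intro: finite_subset)
  then show ?thesis using b by (simp add: Perm_def Sb_def bij_imp_bij_inv)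
qed

lemma Perm_transpose: "transpose a b \<in> Perm"
proof -
  have "{c. transpose a b c \<noteq> c} \<subseteq> {a, b}" by (auto simp: transpose_def)
  then show ?thesis by (auto simp: Perm_def Sb_def intro: finite_subset)
qed

lemma permutes_Perm: "p permutes S \<Longrightarrow> finite S \<Longrightarrow> p \<in> Perm"
proof -
  assume "p permutes S" "finite S"
  moreover have "{a. p a \<noteq> a} \<subseteq> S" using \<open>p permutes S\<close> by (auto simp: permutes_def)
  ultimately show ?thesis by (auto simp: Perm_def Sb_def permutes_bij intro: finite_subset)
qed

lemma supports_mono: "supports M act C x \<Longrightarrow> C \<subseteq> D \<Longrightarrow> supports M act D x"
  unfolding supports_def by blast

lemma supports_Sb_Perm: "supports Sb act C x \<Longrightarrow> supports Perm act C x"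
  unfolding supports_def using Perm_Sb by blast

lemma supp_least:
  assumes ex: "\<exists>C. finite C \<and> supports M act C x"
    and int: "\<And>C D. finite C \<Longrightarrow> finite D \<Longrightarrow> supports M act C x \<Longrightarrow> supports M act D x \<Longrightarrow> supports M act (C \<inter> D) x"
  shows "finite (supp M act x) \<and> supports M act (supp M act x) x \<and>
     (\<forall>D. finite D \<and> supports M act D x \<longrightarrow> supp M act x \<subseteq> D)"
proof -
  define P where "P C \<longleftrightarrow> finite C \<and> supports M act C x" for C
  obtain C0 where "P C0" using ex P_def by blast
  obtain S where S: "P S" "\<And>D. P D \<Longrightarrow> card S \<le> card D"
    using ex_has_least_nat[of P C0 card] \<open>P C0\<close> by blast
  have least: "S \<subseteq> D" if "P D" for D
  proof -
    have "P (S \<inter> D)" using S(1) that int unfolding P_def by auto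
    then have "card S \<le> card (S \<inter> D)" using S(2) by blast
    moreover have "finite S" using S(1) P_def by auto
    ultimately have "S \<inter> D = S" by (metis Int_lower1 card_seteq)
    then show ?thesis by blast
  qed
  have "(THE C. finite C \<and> supports M act C x \<and>
      (\<forall>D. finite D \<and> supports M act D x \<longrightarrow> C \<subseteq> D)) = S"
    apply (rule the_equality)
    using S(1) least unfolding P_def apply blast
    using S(1) least unfolding P_def by blast
  then show ?thesis unfolding supp_def using S(1) least P_def by auto
qed



lemma Sb_int:
  assumes "finite C" "finite D" "supports Sb act C x" "supports Sb act D x"
  shows "supports Sb act (C \<inter> D) x"
  unfolding supports_def
proof (intro ballI impI)
  fix m1 m2 assume m: "m1 \<in> Sb" "m2 \<in> Sb" and ag: "\<forall>a\<in>C \<inter> D. m1 a = m2 a"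
  define n where "n a = (if a \<in> C then m1 a else if a \<in> D then m2 a else a)" for a
  have "{a. n a \<noteq> a} \<subseteq> C \<union> D" by (auto simp: n_def)
  then have n: "n \<in> Sb" using assms(1,2) by (auto simp: Sb_def intro: finite_subset)
  have "\<forall>a\<in>C. n a = m1 a" by (simp add: n_def)
  then have "act n x = act m1 x" using assms(3) n m(1) unfolding supports_def by blast
  moreover have "\<forall>a\<in>D. n a = m2 a" using ag by (simp add: n_def)
  then have "act n x = act m2 x" using assms(4) n m(2) unfolding supports_def by blast
  ultimately show "act m1 x = act m2 x" by simp
qed

lemma act_comp: "nominal_set M X act \<Longrightarrow> m1 \<in> M \<Longrightarrow> m2 \<in> M \<Longrightarrow> x \<in> X \<Longrightarrow> act (m1 \<circ> m2) x = act m1 (act m2 x)"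
  unfolding nominal_set_def by blast

lemma act_id: "nominal_set M X act \<Longrightarrow> x \<in> X \<Longrightarrow> act id x = x"
  unfolding nominal_set_def by blast

lemma act_closed: "nominal_set M X act \<Longrightarrow> m \<in> M \<Longrightarrow> x \<in> X \<Longrightarrow> act m x \<in> X"
  unfolding nominal_set_def by blast

lemma swap_fix:
  assumes "supports Perm act C x" "a \<notin> C" "b \<notin> C" "x \<in> X" "nominal_set Perm X act"
  shows "act (transpose a b) x = x"
proof -
  have "\<forall>c\<in>C. transpose a b c = id c" using assms(2,3) by (auto simp: transpose_def)
  then have "act (transpose a b) x = act id x"
    using assms(1) Perm_transpose Perm_id unfolding supports_def by blast
  then show ?thesis using act_id assms by metis
qed

lemma transpose_decomp:
  assumes "a \<noteq> b" "a \<noteq> c" "b \<noteq> c"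
  shows "transpose a b = transpose a c \<circ> transpose b c \<circ> transpose a c"
  using assms by (auto simp: transpose_def fun_eq_iff)

lemma swap_fix_int:
  assumes N: "nominal_set Perm X act" and x: "x \<in> X"
    and C: "finite C" "supports Perm act C x" and D: "finite D" "supports Perm act D x"
    and ab: "a \<notin> C \<inter> D" "b \<notin> C \<inter> D"
  shows "act (transpose a b) x = x"
proof (cases "(a \<notin> C \<and> b \<notin> C) \<or> (a \<notin> D \<and> b \<notin> D) \<or> a = b")
  case True
  then consider "a \<notin> C \<and> b \<notin> C" | "a \<notin> D \<and> b \<notin> D" | "a = b" by blast
  then show ?thesis
  proof cases
    case 1 then show ?thesis using swap_fix[OF C(2) _ _ x N] by blast
  next
    case 2 then show ?thesis using swap_fix[OF D(2) _ _ x N] by blast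
  next
    case 3 then show ?thesis using act_id[OF N x] by (simp add: id_def)
  qed
next
  case False
  have "finite (C \<union> D \<union> {a, b})" using C(1) D(1) by simp
  then have "\<exists>c. c \<notin> C \<union> D \<union> {a, b}" by (rule ex_new_if_finite[OF infinite_UNIV_nat])
  then obtain c where c: "c \<notin> C \<union> D \<union> {a, b}" by (elim exE)
  have cc: "c \<notin> C" "c \<notin> D" "c \<noteq> a" "c \<noteq> b" using c by simp_all
  have nab: "a \<noteq> b" using False by simp
  have "(a \<in> C \<and> b \<in> D \<and> a \<notin> D \<and> b \<notin> C) \<or> (a \<in> D \<and> b \<in> C \<and> a \<notin> C \<and> b \<notin> D)"
    using False ab by auto
  then have e12: "act (transpose a c) x = x \<and> act (transpose b c) x = x"
  proof
    assume h: "a \<in> C \<and> b \<in> D \<and> a \<notin> D \<and> b \<notin> C"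
    show ?thesis
      using swap_fix[OF D(2) _ cc(2) x N, of a] swap_fix[OF C(2) _ cc(1) x N, of b] h by simp
  next
    assume h: "a \<in> D \<and> b \<in> C \<and> a \<notin> C \<and> b \<notin> D"
    show ?thesis
      using swap_fix[OF C(2) _ cc(1) x N, of a] swap_fix[OF D(2) _ cc(2) x N, of b] h by simp
  qed
  then have e1: "act (transpose a c) x = x" and e2: "act (transpose b c) x = x" by simp_all
  have "act (transpose a b) x = act (transpose a c \<circ> transpose b c \<circ> transpose a c) x"
  proof -
    show ?thesis using transpose_decomp[OF nab cc(3)[symmetric] cc(4)[symmetric]] by simp
  qed
  also have "\<dots> = act (transpose a c) (act (transpose b c) (act (transpose a c) x))"
  proof -
    have x1: "act (transpose a c) x \<in> X" using act_closed[OF N Perm_transpose x] .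
    have "act (transpose a c \<circ> transpose b c \<circ> transpose a c) x
        = act (transpose a c \<circ> transpose b c) (act (transpose a c) x)"
      using act_comp[OF N Perm_comp[OF Perm_transpose Perm_transpose] Perm_transpose x] .
    also have "\<dots> = act (transpose a c) (act (transpose b c) (act (transpose a c) x))"
      using act_comp[OF N Perm_transpose Perm_transpose x1] .
    finally show ?thesis .
  qed
  also have "\<dots> = x" using e1 e2 by simp
  finally show ?thesis .
qed

lemma Perm_int:
  assumes N: "nominal_set Perm X act" and x: "x \<in> X"
    and C: "finite C" "supports Perm act C x" and D: "finite D" "supports Perm act D x"
  shows "supports Perm act (C \<inter> D) x"
  unfolding supports_def
proof (intro ballI impI)
  fix m1 m2 assume m: "m1 \<in> Perm" "m2 \<in> Perm" and ag: "\<forall>a\<in>C \<inter> D. m1 a = m2 a"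
  define s where "s = inv m2 \<circ> m1"
  have sP: "s \<in> Perm" using m by (simp add: s_def Perm_comp Perm_inv)
  have bm2: "bij m2" using m by (simp add: Perm_def)
  define S where "S = {a. s a \<noteq> a}"
  have fS: "finite S" using sP by (simp add: S_def Perm_def Sb_def)
  have sperm: "s permutes S"
  proof -
    have "s permutes UNIV" using sP by (simp add: Perm_def permutes_univ bij_iff)
    then show ?thesis by (rule permutes_superset) (simp add: S_def)
  qed
  have SCD: "S \<inter> (C \<inter> D) = {}"
  proof -
    { fix a assume "a \<in> C \<inter> D"
      then have "s a = inv m2 (m2 a)" using ag by (simp add: s_def)
      also have "\<dots> = a" using bm2 by (simp add: bij_is_inj)
      finally have "a \<notin> S" by (simp add: S_def) }
    then show ?thesis by blast
  qed
  have "act s x = x"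
    using sperm fS
  proof (induction s rule: permutes_induct)
    case id
    then show ?case using act_id[OF N x] by (metis id_def)
  next
    case (swap a b p)
    have pP: "p \<in> Perm" using swap permutes_Perm fS by blast
    have "act (transpose a b \<circ> p) x = act (transpose a b) (act p x)"
      using act_comp[OF N Perm_transpose pP x] .
    also have "\<dots> = x" using swap swap_fix_int[OF N x C D, of a b] SCD by auto
    finally show ?case .
  qed
  have "m1 = m2 \<circ> s" using bm2 by (simp add: s_def fun_eq_iff bij_is_surj surj_f_inv_f)
  then have "act m1 x = act m2 (act s x)" using act_comp[OF N m(2) sP x] by simp
  then show "act m1 x = act m2 x" using \<open>act s x = x\<close> by simp
qed


lemma supports_perm_img:
  assumes N: "nominal_set M Z act" and cl: "\<And>m g. m \<in> M \<Longrightarrow> g \<in> Perm \<Longrightarrow> m \<circ> g \<in> M"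
    and PM: "Perm \<subseteq> M" and z: "z \<in> Z" and g: "g \<in> Perm" and D: "supports M act D z"
  shows "supports M act (g ` D) (act g z)"
  unfolding supports_def
proof (intro ballI impI)
  fix m1 m2 assume m: "m1 \<in> M" "m2 \<in> M" and ag: "\<forall>a\<in>g ` D. m1 a = m2 a"
  have "\<forall>a\<in>D. (m1 \<circ> g) a = (m2 \<circ> g) a" using ag by simp
  then have "act (m1 \<circ> g) z = act (m2 \<circ> g) z" using D cl[OF m(1) g] cl[OF m(2) g] unfolding supports_def by blast
  moreover have "act (m1 \<circ> g) z = act m1 (act g z)" using act_comp[OF N m(1) _ z] g PM by blast
  moreover have "act (m2 \<circ> g) z = act m2 (act g z)" using act_comp[OF N m(2) _ z] g PM by blast
  ultimately show "act m1 (act g z) = act m2 (act g z)" by simp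
qed

lemma ls_Perm:
  assumes N: "nominal_set Perm X act" and x: "x \<in> X"
  shows "finite (supp Perm act x) \<and> supports Perm act (supp Perm act x) x \<and>
     (\<forall>D. finite D \<and> supports Perm act D x \<longrightarrow> supp Perm act x \<subseteq> D)"
proof (rule supp_least)
  show "\<exists>C. finite C \<and> supports Perm act C x" using N x unfolding nominal_set_def by (elim conjE) (rule bspec)
  show "\<And>C D. finite C \<Longrightarrow> finite D \<Longrightarrow> supports Perm act C x \<Longrightarrow> supports Perm act D x \<Longrightarrow> supports Perm act (C \<inter> D) x"
    by (rule Perm_int[OF N x])
qed

lemma ls_Sb:
  assumes N: "nominal_set Sb X act" and x: "x \<in> X"
  shows "finite (supp Sb act x) \<and> supports Sb act (supp Sb act x) x \<and>
     (\<forall>D. finite D \<and> supports Sb act D x \<longrightarrow> supp Sb act x \<subseteq> D)"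
proof (rule supp_least)
  show "\<exists>C. finite C \<and> supports Sb act C x" using N x unfolding nominal_set_def by (elim conjE) (rule bspec)
  show "\<And>C D. finite C \<Longrightarrow> finite D \<Longrightarrow> supports Sb act C x \<Longrightarrow> supports Sb act D x \<Longrightarrow> supports Sb act (C \<inter> D) x"
    by (rule Sb_int)
qed

lemma card_le1_cases:
  assumes "finite A" "card A \<le> 1"
  shows "A = {} \<or> (\<exists>a. A = {a})"
proof (cases "card A = 0")
  case True then show ?thesis using assms(1) by simp
next
  case False then have "card A = 1" using assms(2) by simp
  then show ?thesis using card_1_singletonE by blast
qed

lemma exg:
  assumes "finite A" "card A \<le> 1"
  shows "\<exists>g\<in>Perm. \<forall>a\<in>A. g a = m a"
proof -
  from card_le1_cases[OF assms] show ?thesis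
  proof
    assume "A = {}" then show ?thesis using Perm_id by blast
  next
    assume "\<exists>a. A = {a}"
    then obtain a where "A = {a}" by blast
    then show ?thesis using Perm_transpose[of a "m a"] by (intro bexI[of _ "transpose a (m a)"]) auto
  qed
qed

lemma Frel_cong:
  assumes "Frel X act p q" "n \<in> Sb"
  shows "Frel X act (n \<circ> fst p, snd p) (n \<circ> fst q, snd q)"
  using assms
proof (induction rule: Frel.induct)
  case (refl m x)
  then show ?case by (metis Frel.refl Sb_comp fst_conv snd_conv)
next
  case (sym p q)
  then show ?case by (simp add: Frel.sym)
next
  case (trans p q r)
  then show ?case by (meson Frel.trans)
next
  case (perm m g x)
  have "Frel X act (n \<circ> m, act g x) ((n \<circ> m) \<circ> g, x)"
    using perm by (simp add: Frel.perm Sb_comp)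
  then show ?case by (simp add: comp_def)
next
  case (supp_eq m m' x C)
  have "Frel X act (n \<circ> m, x) (n \<circ> m', x)"
    by (rule Frel.supp_eq[where C=C]) (use supp_eq in \<open>auto simp: Sb_comp\<close>)
  then show ?case by (simp add: comp_def)
qed

lemma Fclass_eq: "Frel X act (m, x) (m', x') \<Longrightarrow> Fclass X act m x = Fclass X act m' x'"
proof -
  assume h: "Frel X act (m, x) (m', x')"
  show ?thesis unfolding Fclass_def
  proof (rule set_eqI, rule iffI)
    fix q assume "q \<in> {q. Frel X act (m, x) q}"
    then show "q \<in> {q. Frel X act (m', x') q}" using Frel.trans[OF Frel.sym[OF h]] by blast
  next
    fix q assume "q \<in> {q. Frel X act (m', x') q}"
    then show "q \<in> {q. Frel X act (m, x) q}" using Frel.trans[OF h] by blast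
  qed
qed

lemma Fclass_eqD: "Fclass X act m x = Fclass X act m' x' \<Longrightarrow> m' \<in> Sb \<Longrightarrow> x' \<in> X \<Longrightarrow> Frel X act (m, x) (m', x')"
proof -
  assume h: "Fclass X act m x = Fclass X act m' x'" "m' \<in> Sb" "x' \<in> X"
  have "(m', x') \<in> Fclass X act m' x'" unfolding Fclass_def using Frel.refl[OF h(2,3)] by simp
  then have "(m', x') \<in> Fclass X act m x" using h(1) by simp
  then show ?thesis unfolding Fclass_def by simp
qed

lemma F_act_Fclass:
  assumes "n \<in> Sb" "m \<in> Sb" "x \<in> X"
  shows "F_act X act n (Fclass X act m x) = Fclass X act (n \<circ> m) x"
proof (rule set_eqI)
  fix q
  show "q \<in> F_act X act n (Fclass X act m x) \<longleftrightarrow> q \<in> Fclass X act (n \<circ> m) x"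
  proof
    assume "q \<in> F_act X act n (Fclass X act m x)"
    then obtain p where p: "Frel X act (m, x) p" "Frel X act (n \<circ> fst p, snd p) q"
      unfolding F_act_def Fclass_def by blast
    have "Frel X act (n \<circ> m, x) (n \<circ> fst p, snd p)" using Frel_cong[OF p(1) assms(1)] by simp
    then have "Frel X act (n \<circ> m, x) q" using p(2) by (rule Frel.trans)
    then show "q \<in> Fclass X act (n \<circ> m) x" unfolding Fclass_def by simp
  next
    assume "q \<in> Fclass X act (n \<circ> m) x"
    then have h: "Frel X act (n \<circ> fst (m, x), snd (m, x)) q" by (simp add: Fclass_def)
    have "(m, x) \<in> Fclass X act m x" using assms by (simp add: Fclass_def Frel.refl)
    then show "q \<in> F_act X act n (Fclass X act m x)" unfolding F_act_def using h by blast
  qed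
qed

lemma Frel_to_id:
  assumes "g \<in> Perm" "x \<in> X"
  shows "Frel X act (g, x) (id, act g x)"
proof -
  have "Frel X act (id, act g x) (id \<circ> g, x)" using assms Frel.perm[of id g x X act] by simp
  then have "Frel X act (id, act g x) (g, x)" by simp
  then show ?thesis by (rule Frel.sym)
qed


definition Psi :: "((atom \<Rightarrow> atom) \<Rightarrow> 'x \<Rightarrow> 'x) \<Rightarrow> (atom \<Rightarrow> atom) \<Rightarrow> 'x \<Rightarrow> 'x" where
  "Psi act m x = act (SOME g. g \<in> Perm \<and> (\<forall>a\<in>supp Perm act x. g a = m a)) x"

context
  fixes X :: "'x set" and act :: "(atom \<Rightarrow> atom) \<Rightarrow> 'x \<Rightarrow> 'x"
  assumes N: "nominal_set Perm X act" and Dm: "dim_le_one Perm X act"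
begin

lemma P_ls: "x \<in> X \<Longrightarrow> finite (supp Perm act x) \<and> supports Perm act (supp Perm act x) x \<and>
     (\<forall>D. finite D \<and> supports Perm act D x \<longrightarrow> supp Perm act x \<subseteq> D)"
  by (rule ls_Perm[OF N])

lemma P_exg:
  assumes x: "x \<in> X" shows "\<exists>g\<in>Perm. \<forall>a\<in>supp Perm act x. g a = m a"
proof -
  have c: "card (supp Perm act x) \<le> 1" using Dm x unfolding dim_le_one_def by (rule bspec)
  have f: "finite (supp Perm act x)" using P_ls[OF x] by simp
  show ?thesis by (rule exg[OF f c])
qed

lemma Psi_eq:
  assumes x: "x \<in> X" and g: "g \<in> Perm" and ag: "\<forall>a\<in>supp Perm act x. g a = m a"
  shows "Psi act m x = act g x"
proof -
  define P where "P = (\<lambda>h. h \<in> Perm \<and> (\<forall>a\<in>supp Perm act x. h a = m a))"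
  define h where "h = (SOME g. P g)"
  have ex: "\<exists>g. P g" using g ag unfolding P_def by blast
  have "P h" unfolding h_def using ex by (rule someI_ex)
  then have hP: "h \<in> Perm" and hag: "\<forall>a\<in>supp Perm act x. h a = m a" unfolding P_def by simp_all
  have agr: "\<forall>a\<in>supp Perm act x. h a = g a" using hag ag by simp
  have sup: "supports Perm act (supp Perm act x) x" using P_ls[OF x] by simp
  have "act h x = act g x" using sup hP g agr unfolding supports_def by blast
  then show ?thesis unfolding Psi_def h_def P_def by simp
qed

lemma supp_img:
  assumes x: "x \<in> X" and g: "g \<in> Perm"
  shows "g ` supp Perm act x \<subseteq> supp Perm act (act g x)"
proof -
  define D where "D = supp Perm act (act g x)"
  have gx: "act g x \<in> X" using act_closed[OF N g x] .
  have D: "finite D" "supports Perm act D (act g x)" using P_ls[OF gx] D_def by auto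
  have ig: "inv g \<in> Perm" using Perm_inv[OF g] .
  have "supports Perm act (inv g ` D) (act (inv g) (act g x))"
    by (rule supports_perm_img[OF N Perm_comp _ gx ig D(2)]) auto
  moreover have "act (inv g) (act g x) = x"
  proof -
    have e: "inv g \<circ> g = id" using g by (simp add: Perm_def bij_is_inj)
    have "act (inv g) (act g x) = act (inv g \<circ> g) x" by (rule act_comp[OF N ig g x, symmetric])
    then show ?thesis unfolding e using act_id[OF N x] by (rule HOL.trans)
  qed
  ultimately have "supports Perm act (inv g ` D) x" by simp
  then have "supp Perm act x \<subseteq> inv g ` D" using P_ls[OF x] D(1) by blast
  then have "g ` supp Perm act x \<subseteq> g ` inv g ` D" by blast
  also have "g ` inv g ` D = D"
  proof -
    have sg: "surj g" using g by (simp add: Perm_def bij_is_surj)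
    then show ?thesis by (simp add: image_image surj_f_inv_f)
  qed
  finally show ?thesis unfolding D_def .
qed

lemma Psi_inv: "Frel X act p q \<Longrightarrow> Psi act (fst p) (snd p) = Psi act (fst q) (snd q)"
proof (induction rule: Frel.induct)
  case (refl m x) then show ?case by simp
next
  case (sym p q) then show ?case by simp
next
  case (trans p q r) then show ?case by simp
next
  case (perm m g x)
  have gx: "act g x \<in> X" using act_closed[OF N perm(2,3)] .
  obtain h where h: "h \<in> Perm" "\<forall>a\<in>supp Perm act (act g x). h a = m a" using P_exg[OF gx] by blast
  have "Psi act m (act g x) = act h (act g x)" using Psi_eq[OF gx h] .
  also have "\<dots> = act (h \<circ> g) x" using act_comp[OF N h(1) perm(2,3)] by simp
  also have "\<dots> = Psi act (m \<circ> g) x"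
  proof -
    have "\<forall>a\<in>supp Perm act x. (h \<circ> g) a = (m \<circ> g) a"
      using supp_img[OF perm(3,2)] h(2) by auto
    then show ?thesis using Psi_eq[OF perm(3) Perm_comp[OF h(1) perm(2)]] by simp
  qed
  finally show ?case by (simp add: comp_def)
next
  case (supp_eq m m' x C)
  have sub: "supp Perm act x \<subseteq> C" using P_ls[OF supp_eq(3)] supp_eq(4,5) by blast
  obtain g where g: "g \<in> Perm" "\<forall>a\<in>supp Perm act x. g a = m a" using P_exg[OF supp_eq(3)] by blast
  have g': "\<forall>a\<in>supp Perm act x. g a = m' a" using g(2) sub supp_eq(6) by auto
  show ?case using Psi_eq[OF supp_eq(3) g] Psi_eq[OF supp_eq(3) g(1) g'] by simp
qed

lemma Fclass_to_id:
  assumes m: "m \<in> Sb" and x: "x \<in> X"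
  shows "\<exists>g\<in>Perm. Fclass X act m x = Fclass X act id (act g x)"
proof -
  obtain g where g: "g \<in> Perm" "\<forall>a\<in>supp Perm act x. g a = m a" using P_exg[OF x] by blast
  have fin: "finite (supp Perm act x)" and sup: "supports Perm act (supp Perm act x) x"
    using P_ls[OF x] by simp_all
  have agr: "\<forall>a\<in>supp Perm act x. m a = g a" using g(2) by simp
  have "Frel X act (m, x) (g, x)"
    by (rule Frel.supp_eq[OF m Perm_Sb[OF g(1)] x fin sup agr])
  moreover have "Frel X act (g, x) (id, act g x)" using Frel_to_id[OF g(1) x] .
  ultimately have fr: "Frel X act (m, x) (id, act g x)" by (rule Frel.trans)
  show ?thesis using g(1) Fclass_eq[OF fr] by blast
qed

lemma part1: "nom_iso Perm X act (F_carrier X act) (F_act X act) (unit_map X act)"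
  unfolding nom_iso_def
proof (intro conjI ballI)
  show "bij_betw (unit_map X act) X (F_carrier X act)"
    unfolding bij_betw_def
  proof
    show "inj_on (unit_map X act) X"
    proof (rule inj_onI)
      fix x y assume x: "x \<in> X" and y: "y \<in> X" and e: "unit_map X act x = unit_map X act y"
      have fr: "Frel X act (id, x) (id, y)" using Fclass_eqD[OF e[unfolded unit_map_def] Sb_id y] .
      have "Psi act id x = Psi act id y" using Psi_inv[OF fr] by simp
      moreover have "Psi act id x = x" using Psi_eq[OF x Perm_id] act_id[OF N x] by simp
      moreover have "Psi act id y = y" using Psi_eq[OF y Perm_id] act_id[OF N y] by simp
      ultimately show "x = y" by simp
    qed
  next
    show "unit_map X act ` X = F_carrier X act"
    proof
      show "unit_map X act ` X \<subseteq> F_carrier X act"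
      proof (rule image_subsetI)
        fix x assume "x \<in> X"
        then show "unit_map X act x \<in> F_carrier X act"
          unfolding unit_map_def F_carrier_def using Sb_id by blast
      qed
    next
      show "F_carrier X act \<subseteq> unit_map X act ` X"
      proof
        fix c assume "c \<in> F_carrier X act"
        then obtain m x where mx: "m \<in> Sb" "x \<in> X" "c = Fclass X act m x" unfolding F_carrier_def by blast
        obtain g where g: "g \<in> Perm" "Fclass X act m x = Fclass X act id (act g x)"
          using Fclass_to_id[OF mx(1,2)] by blast
        have "act g x \<in> X" using act_closed[OF N g(1) mx(2)] .
        moreover have "c = unit_map X act (act g x)" using mx(3) g(2) unfolding unit_map_def by simp
        ultimately show "c \<in> unit_map X act ` X" by (rule rev_image_eqI)
      qed
    qed
  qed
next
  fix g x assume g: "g \<in> Perm" and x: "x \<in> X"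
  have "unit_map X act (act g x) = Fclass X act (id \<circ> g) x"
    unfolding unit_map_def using Fclass_eq[OF Frel.perm[OF Sb_id g x]] .
  also have "\<dots> = Fclass X act (g \<circ> id) x" by simp
  also have "\<dots> = F_act X act g (Fclass X act id x)"
    using F_act_Fclass[OF Perm_Sb[OF g] Sb_id x] by simp
  finally show "unit_map X act (act g x) = F_act X act g (unit_map X act x)"
    unfolding unit_map_def .
qed

end


context
  fixes Y :: "'y set" and act :: "(atom \<Rightarrow> atom) \<Rightarrow> 'y \<Rightarrow> 'y"
  assumes N: "nominal_set Sb Y act" and Dm: "dim_le_one Sb Y act"
begin

lemma S_ls: "y \<in> Y \<Longrightarrow> finite (supp Sb act y) \<and> supports Sb act (supp Sb act y) y \<and>
     (\<forall>D. finite D \<and> supports Sb act D y \<longrightarrow> supp Sb act y \<subseteq> D)"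
  by (rule ls_Sb[OF N])

lemma Perm_supp_Sb:
  assumes y: "y \<in> Y" and C: "finite C" "supports Perm act C y"
  shows "supports Sb act C y"
proof -
  define S where "S = supp Sb act y"
  have S: "finite S" "supports Sb act S y" "\<And>D. finite D \<Longrightarrow> supports Sb act D y \<Longrightarrow> S \<subseteq> D"
    using S_ls[OF y] unfolding S_def by blast+
  have "S \<subseteq> C"
  proof
    fix a assume aS: "a \<in> S"
    show "a \<in> C"
    proof (rule ccontr)
      assume aC: "a \<notin> C"
      have "finite (S \<union> C \<union> {a})" using S(1) C(1) by simp
      then have "\<exists>b. b \<notin> S \<union> C \<union> {a}" by (rule ex_new_if_finite[OF infinite_UNIV_nat])
      then obtain b where b: "b \<notin> S \<union> C \<union> {a}" by (elim exE)
      have bS: "b \<notin> S" and bC: "b \<notin> C" and ba: "b \<noteq> a" using b by simp_all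
      define t where "t = transpose a b"
      have tP: "t \<in> Perm" unfolding t_def by (rule Perm_transpose)
      have ag: "\<forall>c\<in>C. t c = id c" using aC bC unfolding t_def by (auto simp: transpose_def)
      have "act t y = act id y" using C(2) tP Perm_id ag unfolding supports_def by blast
      then have ty: "act t y = y" using act_id[OF N y] by simp
      have "supports Sb act (t ` S) (act t y)"
        by (rule supports_perm_img[OF N Sb_comp _ y tP S(2)]) (auto simp: Perm_Sb)
      then have "supports Sb act (t ` S) y" using ty by simp
      moreover have "finite (t ` S)" using S(1) by simp
      ultimately have "S \<subseteq> t ` S" using S(3) by blast
      then have "a \<in> t ` S" using aS by blast
      then obtain s where s: "s \<in> S" "t s = a" by blast
      have "s = b"
      proof (rule ccontr)
        assume "s \<noteq> b"
        moreover have "s \<noteq> a" using s(2) \<open>s \<noteq> b\<close> ba unfolding t_def by (auto simp: transpose_def split: if_splits)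
        ultimately have "t s = s" unfolding t_def by simp
        then show False using s(2) \<open>s \<noteq> a\<close> by simp
      qed
      then show False using s(1) bS by simp
    qed
  qed
  then show ?thesis using S(2) by (rule supports_mono[rotated])
qed

lemma Phi_inv: "Frel Y act p q \<Longrightarrow> act (fst p) (snd p) = act (fst q) (snd q)"
proof (induction rule: Frel.induct)
  case (refl m x) then show ?case by simp
next
  case (sym p q) then show ?case by simp
next
  case (trans p q r) then show ?case by simp
next
  case (perm m g x)
  have "act (m \<circ> g) x = act m (act g x)" by (rule act_comp[OF N perm(1) Perm_Sb[OF perm(2)] perm(3)])
  then show ?case by (simp add: comp_def)
next
  case (supp_eq m m' x C)
  have "supports Sb act C x" by (rule Perm_supp_Sb[OF supp_eq(3,4,5)])
  then have "act m x = act m' x" using supp_eq(1,2,6) unfolding supports_def by blast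
  then show ?case by simp
qed

lemma counit_Fclass:
  assumes m: "m \<in> Sb" and y: "y \<in> Y"
  shows "counit_map act (Fclass Y act m y) = act m y"
proof -
  define p where "p = (SOME p. p \<in> Fclass Y act m y)"
  have "(m, y) \<in> Fclass Y act m y" unfolding Fclass_def using Frel.refl[OF m y] by simp
  then have "p \<in> Fclass Y act m y" unfolding p_def by (rule someI)
  then have "Frel Y act (m, y) p" unfolding Fclass_def by simp
  then have "act m y = act (fst p) (snd p)" using Phi_inv by fastforce
  then show ?thesis unfolding counit_map_def p_def Let_def by simp
qed

lemma Fclass_id_S:
  assumes m: "m \<in> Sb" and y: "y \<in> Y"
  shows "Fclass Y act m y = Fclass Y act id (act m y)"
proof -
  have c: "card (supp Sb act y) \<le> 1" using Dm y unfolding dim_le_one_def by (rule bspec)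
  have fin: "finite (supp Sb act y)" and supS: "supports Sb act (supp Sb act y) y"
    using S_ls[OF y] by simp_all
  obtain g where g: "g \<in> Perm" "\<forall>a\<in>supp Sb act y. g a = m a" using exg[OF fin c] by blast
  have agr: "\<forall>a\<in>supp Sb act y. m a = g a" using g(2) by simp
  have supP: "supports Perm act (supp Sb act y) y" using supS by (rule supports_Sb_Perm)
  have "Frel Y act (m, y) (g, y)"
    by (rule Frel.supp_eq[OF m Perm_Sb[OF g(1)] y fin supP agr])
  moreover have "Frel Y act (g, y) (id, act g y)" using Frel_to_id[OF g(1) y] .
  ultimately have fr: "Frel Y act (m, y) (id, act g y)" by (rule Frel.trans)
  have "act g y = act m y" using supS g(1) m agr Perm_Sb[OF g(1)] unfolding supports_def by metis
  then show ?thesis using Fclass_eq[OF fr] by simp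
qed

lemma part2: "nom_iso Sb (F_carrier Y act) (F_act Y act) Y act (counit_map act)"
  unfolding nom_iso_def
proof (intro conjI ballI)
  show "bij_betw (counit_map act) (F_carrier Y act) Y"
    unfolding bij_betw_def
  proof
    show "inj_on (counit_map act) (F_carrier Y act)"
    proof (rule inj_onI)
      fix c d assume c: "c \<in> F_carrier Y act" and d: "d \<in> F_carrier Y act"
        and e: "counit_map act c = counit_map act d"
      obtain m y where my: "m \<in> Sb" "y \<in> Y" "c = Fclass Y act m y" using c unfolding F_carrier_def by blast
      obtain m' y' where my': "m' \<in> Sb" "y' \<in> Y" "d = Fclass Y act m' y'" using d unfolding F_carrier_def by blast
      have "act m y = act m' y'" using e counit_Fclass[OF my(1,2)] counit_Fclass[OF my'(1,2)] my(3) my'(3) by simp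
      then show "c = d" using Fclass_id_S[OF my(1,2)] Fclass_id_S[OF my'(1,2)] my(3) my'(3) by simp
    qed
  next
    show "counit_map act ` F_carrier Y act = Y"
    proof
      show "counit_map act ` F_carrier Y act \<subseteq> Y"
      proof (rule image_subsetI)
        fix c assume "c \<in> F_carrier Y act"
        then obtain m y where my: "m \<in> Sb" "y \<in> Y" "c = Fclass Y act m y" unfolding F_carrier_def by blast
        then show "counit_map act c \<in> Y" using counit_Fclass[OF my(1,2)] act_closed[OF N my(1,2)] by simp
      qed
    next
      show "Y \<subseteq> counit_map act ` F_carrier Y act"
      proof
        fix y assume y: "y \<in> Y"
        have "Fclass Y act id y \<in> F_carrier Y act" unfolding F_carrier_def using y Sb_id by blast
        moreover have "y = counit_map act (Fclass Y act id y)"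
          using counit_Fclass[OF Sb_id y] act_id[OF N y] by simp
        ultimately show "y \<in> counit_map act ` F_carrier Y act" by (rule rev_image_eqI)
      qed
    qed
  qed
next
  fix n c assume n: "n \<in> Sb" and c: "c \<in> F_carrier Y act"
  obtain m y where my: "m \<in> Sb" "y \<in> Y" "c = Fclass Y act m y" using c unfolding F_carrier_def by blast
  have "counit_map act (F_act Y act n c) = counit_map act (Fclass Y act (n \<circ> m) y)"
    using F_act_Fclass[OF n my(1,2)] my(3) by simp
  also have "\<dots> = act (n \<circ> m) y" by (rule counit_Fclass[OF Sb_comp[OF n my(1)] my(2)])
  also have "\<dots> = act n (act m y)" by (rule act_comp[OF N n my(1,2)])
  also have "\<dots> = act n (counit_map act c)" using counit_Fclass[OF my(1,2)] my(3) by simp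
  finally show "counit_map act (F_act Y act n c) = act n (counit_map act c)" .
qed

end

theorem mainTheorem6:
  fixes X :: "'x set" and actX :: "(atom \<Rightarrow> atom) \<Rightarrow> 'x \<Rightarrow> 'x"
    and Y :: "'y set" and actY :: "(atom \<Rightarrow> atom) \<Rightarrow> 'y \<Rightarrow> 'y"
  shows "(nominal_set Perm X actX \<and> dim_le_one Perm X actX \<longrightarrow>
            nom_iso Perm X actX (F_carrier X actX) (F_act X actX) (unit_map X actX))
       \<and> (nominal_set Sb Y actY \<and> dim_le_one Sb Y actY \<longrightarrow>
            nom_iso Sb (F_carrier Y actY) (F_act Y actY) Y actY (counit_map actY))"
  using part1 part2 by blast

end
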